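(* Let $k\in\mathbb{N}$. For purely even $k$-dimensional cubes $E,E'$ and a morphism $f\colon E\to E'$ given by the family $(f^\nu)$, let $E^-:=E$ and let $f^-\colon E^-\to E'^-$ be the morphism given by the family $(\mathrm{sgn}(\nu)f^\nu)$. Then $(\mathrm{id}_E)^-=\mathrm{id}_E$ and $(g\circ f)^-=g^-\circ f^-$ for all morphisms $f\colon E\to E'$, $g\colon E'\to E''$ of purely even $k$-dimensional cubes; hence ${}^-$ is a functor on the category of purely even $k$-dimensional cubes, which is inverse to itself and respects products.
   Context: $\mathcal{P}^k_+$: nonempty subsets of $\{1..k\}$; $\mathrm{Part}(I)$: set of partitions $\nu=\{\nu_1,\dots,\nu_\ell\}$ of $I$ into nonempty blocks, $\ell(\nu)=\ell$. A $k$-dimensional cube is a family $(E_I)_{I\in\mathcal{P}^k_+}$ of real vector spaces with total space $E=\bigoplus_IE_I$, written $v=\sum_Iv_I$; it is purely even if $E_I=\{0\}$ whenever $|I|$ is odd. A morphism of cubes $f\colon E\to E'$ is a map $\sum_Iv_I\mapsto\sum_I\sum_{\nu\in\mathrm{Part}(I)}f^\nu(v_{\nu_1},\dots,v_{\nu_{\ell(\nu)}})$ where each $f^\nu\colon E_{\nu_1}\times\dots\times E_{\nu_{\ell(\nu)}}\to E'_I$ is multilinear (blocks listed in lexicographic order, for sets compared as increasingly ordered tuples); composition is composition of maps, and products are $(E\times E')_I=E_I\times E'_I$. Sign of a partition $\nu$ of $I=\{i_1<\dots<i_s\}$: concatenate the elements of $\nu_1,\dots,\nu_\ell$ (each block in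 increasing order, blocks in lexicographic order) into a tuple, and $\mathrm{sgn}(\nu)$ is the sign of the permutation bringing this tuple to $(i_1,\dots,i_s)$. *)

theory Defs
  imports "HOL-Analysis.Analysis" "HOL-Combinatorics.Permutations" "HOL-Library.Disjoint_Sets"
    "HOL-Library.List_Lexorder"
begin

definition Pk :: "nat \<Rightarrow> nat set set" where
  "Pk k = {I. I \<noteq> {} \<and> I \<subseteq> {1..k}}"

definition Part :: "nat set \<Rightarrow> nat set set set" where
  "Part I = {\<nu>. partition_on I \<nu>}"

text \<open>Blocks as increasingly ordered tuples, listed in lexicographic order.\<close>
definition block_lists :: "nat set set \<Rightarrow> nat list list" where
  "block_lists \<nu> = sorted_list_of_set (sorted_list_of_set ` \<nu>)"

definition blocks :: "nat set set \<Rightarrow> nat set list" where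
  "blocks \<nu> = map set (block_lists \<nu>)"

definition psign :: "nat set set \<Rightarrow> int" where
  "psign \<nu> = sign (THE p. p permutes {..<length (concat (block_lists \<nu>))} \<and>
      permute_list p (concat (block_lists \<nu>)) = sorted_list_of_set (\<Union>\<nu>))"

text \<open>A k-dimensional cube: a family of real vector spaces E_I (here subspaces of a
  common real vector space), I in Pk k.\<close>
definition cube :: "nat \<Rightarrow> (nat set \<Rightarrow> 'a::real_vector set) \<Rightarrow> bool" where
  "cube k E \<longleftrightarrow> (\<forall>I\<in>Pk k. subspace (E I))"

definition purely_even :: "nat \<Rightarrow> (nat set \<Rightarrow> 'a::real_vector set) \<Rightarrow> bool" where
  "purely_even k E \<longleftrightarrow> cube k E \<and> (\<forall>I\<in>Pk k. odd (card I) \<longrightarrow> E I = {0})"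

text \<open>Total space: elements v = sum of v_I, represented as the function I \<mapsto> v_I.\<close>
definition total :: "nat \<Rightarrow> (nat set \<Rightarrow> 'a::real_vector set) \<Rightarrow> (nat set \<Rightarrow> 'a) set" where
  "total k E = {v. (\<forall>I\<in>Pk k. v I \<in> E I) \<and> (\<forall>I. I \<notin> Pk k \<longrightarrow> v I = 0)}"

definition prod_cube :: "(nat set \<Rightarrow> 'a set) \<Rightarrow> (nat set \<Rightarrow> 'b set) \<Rightarrow> nat set \<Rightarrow> ('a \<times> 'b) set" where
  "prod_cube E E' = (\<lambda>I. E I \<times> E' I)"

text \<open>Multilinear maps E_1 \<times> ... \<times> E_l \<rightarrow> T, arguments given as a list.\<close>
definition multilinear_on :: "'a::real_vector set list \<Rightarrow> 'b::real_vector set \<Rightarrow> ('a list \<Rightarrow> 'b) \<Rightarrow> bool" where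
  "multilinear_on Es T f \<longleftrightarrow>
     (\<forall>xs. length xs = length Es \<and> (\<forall>i<length Es. xs ! i \<in> Es ! i) \<longrightarrow>
        f xs \<in> T \<and>
        (\<forall>i<length Es. \<forall>y\<in>Es ! i. \<forall>z\<in>Es ! i. \<forall>a b.
           f (xs[i := a *\<^sub>R y + b *\<^sub>R z]) = a *\<^sub>R f (xs[i := y]) + b *\<^sub>R f (xs[i := z])))"

definition mor :: "nat \<Rightarrow> (nat set \<Rightarrow> 'a::real_vector set) \<Rightarrow> (nat set \<Rightarrow> 'b::real_vector set)
    \<Rightarrow> (nat set set \<Rightarrow> 'a list \<Rightarrow> 'b) \<Rightarrow> bool" where
  "mor k E E' F \<longleftrightarrow> (\<forall>I\<in>Pk k. \<forall>\<nu>\<in>Part I. multilinear_on (map E (blocks \<nu>)) (E' I) (F \<nu>))"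

definition mor_app :: "nat \<Rightarrow> (nat set set \<Rightarrow> 'a list \<Rightarrow> 'b::real_vector)
    \<Rightarrow> (nat set \<Rightarrow> 'a) \<Rightarrow> nat set \<Rightarrow> 'b" where
  "mor_app k F v = (\<lambda>I. if I \<in> Pk k then (\<Sum>\<nu>\<in>Part I. F \<nu> (map v (blocks \<nu>))) else 0)"

definition msign :: "(nat set set \<Rightarrow> 'a list \<Rightarrow> 'b::real_vector) \<Rightarrow> nat set set \<Rightarrow> 'a list \<Rightarrow> 'b" where
  "msign F = (\<lambda>\<nu> xs. of_int (psign \<nu>) *\<^sub>R F \<nu> xs)"

end

theory Submission
  imports Defs
begin


definition sgnl :: "nat list \<Rightarrow> nat list \<Rightarrow> int" where
  "sgnl xs ys = sign (THE p. p permutes {..<length xs} \<and> permute_list p xs = ys)"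

lemma perm_list_unique:
  assumes "distinct xs" "p permutes {..<length xs}" "q permutes {..<length xs}"
    "permute_list p xs = permute_list q xs"
  shows "p = q"
proof
  fix i show "p i = q i"
  proof (cases "i < length xs")
    case True
    have "permute_list p xs ! i = permute_list q xs ! i" using assms(4) by simp
    hence "xs ! p i = xs ! q i" using permute_list_nth assms True by metis
    moreover have "p i < length xs" "q i < length xs"
      using permutes_in_image[OF assms(2)] permutes_in_image[OF assms(3)] True by auto
    ultimately show ?thesis using assms(1) nth_eq_iff_index_eq by blast
  next
    case False thus ?thesis using permutes_not_in[OF assms(2)] permutes_not_in[OF assms(3)] by auto
  qed
qed

lemma sgnl_eq:
  assumes "distinct xs" "p permutes {..<length xs}" "permute_list p xs = ys"
  shows "sgnl xs ys = sign p"
proof -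
  have "(THE p. p permutes {..<length xs} \<and> permute_list p xs = ys) = p"
    by (rule the_equality) (use assms perm_list_unique in auto)
  thus ?thesis by (simp add: sgnl_def)
qed

lemma sgnl_exists:
  assumes "mset xs = mset ys"
  obtains p where "p permutes {..<length xs}" "permute_list p xs = ys"
  using mset_eq_permutation[of ys xs] assms by metis

lemma sgnl_pm: "sgnl xs ys = 1 \<or> sgnl xs ys = -1"
  by (simp add: sgnl_def sign_def)

lemma sgnl_refl: "distinct xs \<Longrightarrow> sgnl xs xs = 1"
  using sgnl_eq[of xs id xs] by (simp add: permutes_id)

lemma sgnl_trans:
  assumes "distinct xs" "mset xs = mset ys" "mset ys = mset zs"
  shows "sgnl xs zs = sgnl xs ys * sgnl ys zs"
proof -
  obtain p where p: "p permutes {..<length xs}" "permute_list p xs = ys" using sgnl_exists assms(2) by metis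
  obtain q where q: "q permutes {..<length ys}" "permute_list q ys = zs" using sgnl_exists assms(3) by metis
  have len: "length ys = length xs" using assms(2) mset_eq_length by metis
  have dy: "distinct ys" using assms(1,2) mset_eq_imp_distinct_iff by metis
  have pq: "p \<circ> q permutes {..<length xs}" using p q len permutes_compose by metis
  have "permute_list (p \<circ> q) xs = zs" using permute_list_compose[of q xs p] p q len by simp
  hence "sgnl xs zs = sign (p \<circ> q)" using sgnl_eq assms(1) pq by blast
  also have "\<dots> = sign p * sign q"
    by (rule sign_compose) (use p q permutation_permutes in auto)
  also have "sign p = sgnl xs ys" using sgnl_eq assms(1) p by metis
  also have "sign q = sgnl ys zs" using sgnl_eq dy q by metis
  finally show ?thesis .
qed

lemma sgnl_sym:
  assumes "distinct xs" "mset xs = mset ys"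
  shows "sgnl ys xs = sgnl xs ys"
proof -
  have "1 = sgnl xs ys * sgnl ys xs" using sgnl_trans[OF assms(1,2) assms(2)[symmetric]] sgnl_refl assms(1) by simp
  thus ?thesis using sgnl_pm[of xs ys] sgnl_pm[of ys xs] by auto
qed

lemma sgnl_app_right:
  assumes "distinct (as @ bs)" "mset as = mset cs"
  shows "sgnl (as @ bs) (cs @ bs) = sgnl as cs"
proof -
  obtain p where p: "p permutes {..<length as}" "permute_list p as = cs" using sgnl_exists assms(2) by metis
  have p': "p permutes {..<length (as @ bs)}" using p(1) by (rule permutes_subset) auto
  have "permute_list p (as @ bs) = cs @ bs"
  proof (rule nth_equalityI)
    show "length (permute_list p (as @ bs)) = length (cs @ bs)" using p by (simp add: flip: p(2))
  next
    fix i assume i: "i < length (permute_list p (as @ bs))"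
    show "permute_list p (as @ bs) ! i = (cs @ bs) ! i"
    proof (cases "i < length as")
      case True
      have "p i < length as" using permutes_in_image[OF p(1)] True by auto
      thus ?thesis using True i p permute_list_nth[OF p' ] permute_list_nth[OF p(1)]
        by (auto simp: nth_append)
    next
      case False
      hence "p i = i" using permutes_not_in[OF p(1)] by auto
      thus ?thesis using False i p permute_list_nth[OF p'] by (auto simp: nth_append)
    qed
  qed
  hence "sgnl (as @ bs) (cs @ bs) = sign p" using sgnl_eq assms(1) p' by blast
  moreover have "sgnl as cs = sign p" using sgnl_eq assms(1) p by auto
  ultimately show ?thesis by simp
qed

lemma sgnl_app_left:
  assumes "distinct (as @ bs)" "mset bs = mset ds"
  shows "sgnl (as @ bs) (as @ ds) = sgnl bs ds"
proof -
  obtain p where p: "p permutes {..<length bs}" "permute_list p bs = ds" using sgnl_exists assms(2) by metis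
  define f where "f = (\<lambda>i::nat. length as + i)"
  define q where "q = map_permutation {..<length bs} f p"
  have bij: "bij_betw f {..<length bs} {length as..<length as + length bs}"
    unfolding f_def by (rule bij_betwI[where g="\<lambda>i. i - length as"]) auto
  have inj: "inj_on f {..<length bs}" using bij bij_betw_imp_inj_on by blast
  have q1: "q permutes {length as..<length as + length bs}"
    unfolding q_def using map_permutation_permutes[OF bij p(1)] .
  have q': "q permutes {..<length (as @ bs)}" using q1 by (rule permutes_subset) auto
  have qa: "q (length as + j) = length as + p j" if "j < length bs" for j
    using map_permutation_apply[OF inj, of j p] that unfolding q_def f_def by simp
  have "permute_list q (as @ bs) = as @ ds"
  proof (rule nth_equalityI)
    show "length (permute_list q (as @ bs)) = length (as @ ds)" using p by (simp add: flip: p(2))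
  next
    fix i assume i: "i < length (permute_list q (as @ bs))"
    show "permute_list q (as @ bs) ! i = (as @ ds) ! i"
    proof (cases "i < length as")
      case False
      then obtain j where j: "i = length as + j" "j < length bs" using i
        by (metis add_diff_inverse_nat length_append length_permute_list nat_add_left_cancel_less)
      have "p j < length bs" using permutes_in_image[OF p(1)] j by auto
      thus ?thesis using j qa permute_list_nth[OF q'] permute_list_nth[OF p(1)] i p(2)
        by (auto simp: nth_append)
    next
      case True
      hence "q i = i" using permutes_not_in[OF q1] by auto
      thus ?thesis using True i permute_list_nth[OF q'] by (auto simp: nth_append)
    qed
  qed
  hence "sgnl (as @ bs) (as @ ds) = sign q" using sgnl_eq assms(1) q' by blast
  also have "sign q = sign p" unfolding q_def by (rule sign_map_permutation[OF inj p(1)]) auto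
  also have "sign p = sgnl bs ds" using sgnl_eq assms(1) p by auto
  finally show ?thesis .
qed

lemma sgnl_swap2:
  assumes "a \<noteq> b" shows "sgnl [a, b] [b, a] = -1"
proof -
  have t: "Transposition.transpose 0 1 permutes {..<length [a,b]}" by (rule permutes_swap_id) auto
  have "permute_list (Transposition.transpose 0 1) [a, b] = [b, a]"
    by (simp add: permute_list_def)
  hence "sgnl [a,b] [b,a] = sign (Transposition.transpose (0::nat) 1)" using sgnl_eq t assms by auto
  thus ?thesis by (simp add: sign_swap_id)
qed

lemma sgnl_rot1:
  assumes "distinct (a # bs)"
  shows "sgnl (a # bs) (bs @ [a]) = (-1) ^ length bs"
  using assms
proof (induction bs arbitrary: a)
  case Nil thus ?case using sgnl_refl by simp
next
  case (Cons b bs)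
  have d: "distinct ([a, b] @ bs)" using Cons.prems by simp
  have s1: "sgnl (a # b # bs) (b # a # bs) = -1"
    using sgnl_app_right[OF d, of "[b,a]"] sgnl_swap2[of a b] Cons.prems by auto
  have d2: "distinct ([b] @ (a # bs))" using Cons.prems by auto
  have s2: "sgnl (b # a # bs) (b # bs @ [a]) = (-1) ^ length bs"
    using sgnl_app_left[OF d2, of "bs @ [a]"] Cons.IH[of a] Cons.prems by auto
  have "sgnl (a # b # bs) (b # bs @ [a]) = sgnl (a # b # bs) (b # a # bs) * sgnl (b # a # bs) (b # bs @ [a])"
    by (rule sgnl_trans) (use Cons.prems in auto)
  thus ?case using s1 s2 by simp
qed

lemma sgnl_swap:
  assumes "distinct (as @ bs)"
  shows "sgnl (as @ bs) (bs @ as) = (-1) ^ (length as * length bs)"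
  using assms
proof (induction as)
  case Nil thus ?case using sgnl_refl by simp
next
  case (Cons a as)
  have e1: "sgnl (a # as @ bs) (a # bs @ as) = (-1) ^ (length as * length bs)"
    using sgnl_app_left[of "[a]" "as @ bs" "bs @ as"] Cons by auto
  have e2: "sgnl (a # bs @ as) ((bs @ as) @ [a]) = (-1) ^ (length bs + length as)"
    using sgnl_rot1[of a "bs @ as"] Cons.prems by auto
  have e3': "sgnl (a # as) (as @ [a]) = (-1) ^ length as" using sgnl_rot1[of a as] Cons.prems by auto
  have e3'': "sgnl (as @ [a]) (a # as) = (-1) ^ length as"
    using sgnl_sym[of "a # as" "as @ [a]"] e3' Cons.prems by auto
  have e3: "sgnl (bs @ as @ [a]) (bs @ a # as) = (-1) ^ length as"
    using sgnl_app_left[of bs "as @ [a]" "a # as"] e3'' Cons.prems by auto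
  have "sgnl (a # as @ bs) (bs @ a # as) =
      sgnl (a # as @ bs) (a # bs @ as) * sgnl (a # bs @ as) (bs @ a # as)"
    by (rule sgnl_trans) (use Cons.prems in auto)
  also have "sgnl (a # bs @ as) (bs @ a # as) =
      sgnl (a # bs @ as) ((bs @ as) @ [a]) * sgnl ((bs @ as) @ [a]) (bs @ a # as)"
    by (rule sgnl_trans) (use Cons.prems in auto)
  finally have "sgnl (a # as @ bs) (bs @ a # as) =
     (-1) ^ (length as * length bs) * ((-1) ^ (length bs + length as) * (-1) ^ length as)"
    using e1 e2 e3 by simp
  also have "\<dots> = (-1) ^ (length as * length bs + length bs + 2 * length as)"
    by (simp add: power_add mult_2)
  also have "\<dots> = (-1) ^ (length as * length bs + length bs)"
    by (simp add: power_add power_mult)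
  finally show ?case by (simp add: algebra_simps)
qed

lemma sgnl_app:
  assumes "distinct (as @ bs)" "mset as = mset cs" "mset bs = mset ds"
  shows "sgnl (as @ bs) (cs @ ds) = sgnl as cs * sgnl bs ds"
proof -
  have d: "distinct (cs @ bs)"
    using assms mset_eq_imp_distinct_iff[of "as @ bs" "cs @ bs"] by auto
  have "sgnl (as @ bs) (cs @ ds) = sgnl (as @ bs) (cs @ bs) * sgnl (cs @ bs) (cs @ ds)"
    by (rule sgnl_trans) (use assms in auto)
  thus ?thesis using sgnl_app_right[OF assms(1,2)] sgnl_app_left[OF d assms(3)] by simp
qed

lemma sgnl_concat:
  assumes "length xss = length yss" "distinct (concat xss)"
    "\<forall>i<length xss. mset (xss ! i) = mset (yss ! i)"
  shows "sgnl (concat xss) (concat yss) = (\<Prod>i<length xss. sgnl (xss ! i) (yss ! i))"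
  using assms
proof (induction xss arbitrary: yss)
  case Nil thus ?case using sgnl_refl by simp
next
  case (Cons xs xss)
  then obtain y yss' where y: "yss = y # yss'" by (cases yss) auto
  have m: "\<forall>i<length xss. mset (xss ! i) = mset (yss' ! i)" using Cons.prems y by auto
  have "map mset xss = map mset yss'"
    by (rule nth_equalityI) (use m Cons.prems y in auto)
  hence "mset (concat xss) = mset (concat yss')"
    by (simp add: mset_concat sum_mset_sum_list[symmetric] flip: map_map)
  hence "sgnl (concat (xs # xss)) (concat yss) = sgnl xs y * sgnl (concat xss) (concat yss')"
    using sgnl_app[of xs "concat xss" y "concat yss'"] Cons.prems y by fastforce
  also have "sgnl (concat xss) (concat yss') = (\<Prod>i<length xss. sgnl (xss ! i) (yss' ! i))"
    using Cons.IH[of yss'] Cons.prems y m by auto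
  finally show ?case using y by (simp only: length_Cons prod.lessThan_Suc_shift) simp
qed

lemma mset_concat_eq: "mset L = mset L' \<Longrightarrow> mset (concat L) = mset (concat L')"
  by (simp add: mset_concat sum_mset_sum_list[symmetric])

lemma sgnl_even_blocks:
  assumes "distinct (concat L)" "mset L = mset L'" "\<forall>l\<in>set L. even (length l)"
  shows "sgnl (concat L) (concat L') = 1"
  using assms
proof (induction L' arbitrary: L)
  case Nil thus ?case using sgnl_refl[of "[]"] by simp
next
  case (Cons l L'')
  have "l \<in> set L" using Cons.prems(2) by (metis list.set_intros(1) set_mset_mset)
  then obtain as bs where L: "L = as @ l # bs" by (meson split_list)
  have ev: "even (length l)" using Cons.prems(3) L by auto
  have d: "distinct (concat as @ l @ concat bs)" using Cons.prems(1) L by simp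
  have s1: "sgnl ((concat as @ l) @ concat bs) ((l @ concat as) @ concat bs) = 1"
    using sgnl_app_right[of "concat as @ l" "concat bs" "l @ concat as"] sgnl_swap[of "concat as" l] d ev
    by auto
  have m2: "mset (as @ bs) = mset L''" using Cons.prems(2) L by simp
  have d2: "distinct (concat (as @ bs))" using d by auto
  have IH: "sgnl (concat (as @ bs)) (concat L'') = 1"
    using Cons.IH[OF d2 m2] Cons.prems(3) L by auto
  have s2: "sgnl (l @ concat (as @ bs)) (l @ concat L'') = 1"
    using sgnl_app_left[of l "concat (as @ bs)" "concat L''"] IH mset_concat_eq[OF m2] d by auto
  have "sgnl (concat L) (concat (l # L'')) =
     sgnl ((concat as @ l) @ concat bs) ((l @ concat as) @ concat bs) *
     sgnl (l @ concat (as @ bs)) (l @ concat L'')"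
    using sgnl_trans[of "(concat as @ l) @ concat bs" "(l @ concat as) @ concat bs" "l @ concat L''"]
      d mset_concat_eq[OF m2] L by (simp add: ac_simps)
  thus ?case using s1 s2 by simp
qed

lemma part_props:
  assumes "\<nu> \<in> Part I" "finite I"
  shows "finite \<nu>" "\<Union>\<nu> = I" "\<And>B. B \<in> \<nu> \<Longrightarrow> finite B \<and> B \<noteq> {} \<and> B \<subseteq> I"
    "disjoint \<nu>"
proof -
  have p: "partition_on I \<nu>" using assms(1) by (simp add: Part_def)
  show "\<Union>\<nu> = I" using p by (simp add: partition_on_def)
  show "disjoint \<nu>" using p by (simp add: partition_on_def)
  have "\<nu> \<subseteq> Pow I" using p by (auto simp: partition_on_def)
  thus "finite \<nu>" using assms(2) by (meson finite_Pow_iff finite_subset)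
  fix B assume "B \<in> \<nu>"
  thus "finite B \<and> B \<noteq> {} \<and> B \<subseteq> I" using p assms(2)
    by (metis partition_onD1 partition_onD3 Union_upper rev_finite_subset)
qed

lemma finite_Part: "finite I \<Longrightarrow> finite (Part I)"
proof -
  assume f: "finite I"
  have "Part I \<subseteq> Pow (Pow I)" using part_props[OF _ f] by blast
  thus ?thesis using f by (meson finite_Pow_iff finite_subset)
qed

lemma sls_inj: "inj_on sorted_list_of_set {B. finite B}"
  by (rule inj_onI) (metis mem_Collect_eq sorted_list_of_set.set_sorted_key_list_of_set)

lemma bl_props:
  assumes "finite \<nu>" "\<And>B. B \<in> \<nu> \<Longrightarrow> finite B"
  shows "set (block_lists \<nu>) = sorted_list_of_set ` \<nu>" "distinct (block_lists \<nu>)"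
    "set (blocks \<nu>) = \<nu>" "distinct (blocks \<nu>)" "length (blocks \<nu>) = length (block_lists \<nu>)"
    "\<And>i. i < length (blocks \<nu>) \<Longrightarrow> block_lists \<nu> ! i = sorted_list_of_set (blocks \<nu> ! i)"
    "set (concat (block_lists \<nu>)) = \<Union>\<nu>"
proof -
  have fi: "finite (sorted_list_of_set ` \<nu>)" using assms by simp
  show s: "set (block_lists \<nu>) = sorted_list_of_set ` \<nu>" unfolding block_lists_def using fi by simp
  show d: "distinct (block_lists \<nu>)" unfolding block_lists_def by simp
  have e: "\<And>l. l \<in> set (block_lists \<nu>) \<Longrightarrow> sorted_list_of_set (set l) = l \<and> set l \<in> \<nu>"
    using s assms(2) by auto
  show "set (blocks \<nu>) = \<nu>" unfolding blocks_def using s assms(2) by (auto simp: image_image)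
  have "inj_on set (set (block_lists \<nu>))" by (rule inj_onI) (metis e)
  thus "distinct (blocks \<nu>)" unfolding blocks_def using d by (simp add: distinct_map)
  show "length (blocks \<nu>) = length (block_lists \<nu>)" by (simp add: blocks_def)
  fix i assume "i < length (blocks \<nu>)"
  thus "block_lists \<nu> ! i = sorted_list_of_set (blocks \<nu> ! i)"
    unfolding blocks_def using e[of "block_lists \<nu> ! i"] by simp
next
  show "set (concat (block_lists \<nu>)) = \<Union>\<nu>"
    unfolding block_lists_def using assms by auto
qed

lemma distinct_concat_bl:
  assumes "finite \<nu>" "\<And>B. B \<in> \<nu> \<Longrightarrow> finite B" "disjoint \<nu>"
  shows "distinct (concat (block_lists \<nu>))"
proof (rule distinct_concat)
  show "distinct (block_lists \<nu>)" using bl_props assms by blast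
  fix ys assume "ys \<in> set (block_lists \<nu>)"
  thus "distinct ys" using bl_props(1)[OF assms(1,2)] by auto
next
  fix ys zs assume "ys \<in> set (block_lists \<nu>)" "zs \<in> set (block_lists \<nu>)" "ys \<noteq> zs"
  then obtain B C where "B \<in> \<nu>" "C \<in> \<nu>" "ys = sorted_list_of_set B" "zs = sorted_list_of_set C"
    using bl_props(1)[OF assms(1,2)] by auto
  moreover have "B \<noteq> C" using calculation \<open>ys \<noteq> zs\<close> by auto
  ultimately show "set ys \<inter> set zs = {}" using assms
    by (auto simp: disjoint_def)
qed

lemma part_sub_eq:
  assumes "\<nu> \<in> Part J" "\<pi> \<in> Part J" "disjoint S" "\<nu> \<subseteq> S" "\<pi> \<subseteq> S"
  shows "\<nu> = \<pi>"
proof -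
  have pn: "partition_on J \<nu>" and pp: "partition_on J \<pi>" using assms by (auto simp: Part_def)
  have *: "\<alpha> \<subseteq> \<beta>" if t1: "partition_on J \<alpha>" and t2: "partition_on J \<beta>" and t3: "\<alpha> \<subseteq> S" and t4: "\<beta> \<subseteq> S" for \<alpha> \<beta>
  proof
    fix B assume B: "B \<in> \<alpha>"
    have "B \<noteq> {}" using t1 partition_onD3 B by metis
    then obtain x where x: "x \<in> B" by blast
    hence "x \<in> J" using B t1 partition_onD1 by fastforce
    then obtain C where C: "C \<in> \<beta>" "x \<in> C" using t2 partition_onD1 by fastforce
    have "B = C" using assms(3) B C x t3 t4 by (auto simp: disjoint_def)
    thus "B \<in> \<beta>" using C by simp
  qed
  show ?thesis using *[OF pn pp] *[OF pp pn] assms by auto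
qed

lemma U_part:
  assumes "\<nu> \<in> Part I" "finite I" "n = length (blocks \<nu>)"
    "\<sigma> \<in> PiE {..<n} (\<lambda>i. Part (blocks \<nu> ! i))"
  shows "\<Union>(\<sigma> ` {..<n}) \<in> Part I"
    "\<And>i. i < n \<Longrightarrow> {B \<in> \<Union>(\<sigma> ` {..<n}). B \<subseteq> blocks \<nu> ! i} = \<sigma> i"
proof -
  note pv = part_props[OF assms(1,2)]
  have sb: "set (blocks \<nu>) = \<nu>" "distinct (blocks \<nu>)" using bl_props pv by auto
  have bi: "blocks \<nu> ! i \<in> \<nu>" if "i < n" for i using sb that assms(3) nth_mem by blast
  have fbi: "finite (blocks \<nu> ! i)" if "i < n" for i using bi that pv by blast
  have si: "\<sigma> i \<in> Part (blocks \<nu> ! i)" if "i < n" for i using assms(4) that by auto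
  have Bsub: "B \<subseteq> blocks \<nu> ! i \<and> B \<noteq> {}" if "i < n" "B \<in> \<sigma> i" for i B
    using part_props(3)[OF si fbi] that by blast
  have dij: "blocks \<nu> ! i \<inter> blocks \<nu> ! j = {}" if "i < n" "j < n" "i \<noteq> j" for i j
  proof -
    have "blocks \<nu> ! i \<noteq> blocks \<nu> ! j" using sb(2) that assms(3) nth_eq_iff_index_eq by blast
    thus ?thesis using pv(4) bi that by (auto simp: disjoint_def)
  qed
  show sel: "{B \<in> \<Union>(\<sigma> ` {..<n}). B \<subseteq> blocks \<nu> ! i} = \<sigma> i" if "i < n" for i
  proof
    show "\<sigma> i \<subseteq> {B \<in> \<Union>(\<sigma> ` {..<n}). B \<subseteq> blocks \<nu> ! i}" using Bsub that by auto
    show "{B \<in> \<Union>(\<sigma> ` {..<n}). B \<subseteq> blocks \<nu> ! i} \<subseteq> \<sigma> i"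
    proof safe
      fix B j assume "j < n" "B \<in> \<sigma> j" "B \<subseteq> blocks \<nu> ! i"
      moreover have "i = j" using Bsub[OF \<open>j < n\<close> \<open>B \<in> \<sigma> j\<close>] dij[of i j] \<open>B \<subseteq> blocks \<nu> ! i\<close> that \<open>j < n\<close>
        by blast
      ultimately show "B \<in> \<sigma> i" by simp
    qed
  qed
  show "\<Union>(\<sigma> ` {..<n}) \<in> Part I"
    unfolding Part_def mem_Collect_eq partition_on_def
  proof (intro conjI)
    have "\<Union>(\<Union>(\<sigma> ` {..<n})) = (\<Union>i<n. \<Union>(\<sigma> i))" by auto
    also have "\<dots> = (\<Union>i<n. blocks \<nu> ! i)" using part_props(2)[OF si fbi] by auto
    also have "\<dots> = \<Union>(set (blocks \<nu>))" using assms(3) by (auto simp: in_set_conv_nth) (use nth_mem in blast)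
    finally show "\<Union>(\<Union>(\<sigma> ` {..<n})) = I" using sb pv by simp
    show "{} \<notin> \<Union>(\<sigma> ` {..<n})" using Bsub by blast
    have "B \<inter> C = {}" if h: "B \<in> \<Union>(\<sigma> ` {..<n})" "C \<in> \<Union>(\<sigma> ` {..<n})" "B \<noteq> C" for B C
    proof -
      obtain i j where ij: "i < n" "j < n" "B \<in> \<sigma> i" "C \<in> \<sigma> j" using h by auto
      show ?thesis
      proof (cases "i = j")
        case True
        thus ?thesis using part_props(4)[OF si fbi, of i] h ij by (auto simp: disjoint_def)
      next
        case False thus ?thesis using dij[of i j] Bsub ij by blast
      qed
    qed
    thus "disjoint (\<Union>(\<sigma> ` {..<n}))" unfolding disjoint_def by blast
  qed
qed

lemma psign_sgnl: "psign \<mu> = sgnl (concat (block_lists \<mu>)) (sorted_list_of_set (\<Union>\<mu>))"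
  by (simp add: psign_def sgnl_def)

lemma blocks_disj:
  assumes "\<nu> \<in> Part I" "finite I" "i < length (blocks \<nu>)" "j < length (blocks \<nu>)" "i \<noteq> j"
  shows "blocks \<nu> ! i \<inter> blocks \<nu> ! j = {}"
proof -
  note pv = part_props[OF assms(1,2)]
  have sb: "set (blocks \<nu>) = \<nu>" "distinct (blocks \<nu>)" using bl_props pv by auto
  have "blocks \<nu> ! i \<noteq> blocks \<nu> ! j" using sb(2) assms nth_eq_iff_index_eq by blast
  moreover have "blocks \<nu> ! i \<in> \<nu>" "blocks \<nu> ! j \<in> \<nu>" using sb assms nth_mem by blast+
  ultimately show ?thesis using pv(4) by (auto simp: disjoint_def)
qed

lemma concat_concat': "concat (concat xss) = concat (map concat xss)"
  by (induct xss) auto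

lemma psign_refine:
  assumes nu: "\<nu> \<in> Part I" and fI: "finite I" and n: "n = length (blocks \<nu>)"
    and sig: "\<sigma> \<in> PiE {..<n} (\<lambda>i. Part (blocks \<nu> ! i))"
    and ev: "\<forall>B\<in>\<Union>(\<sigma> ` {..<n}). even (card B)"
  shows "psign (\<Union>(\<sigma> ` {..<n})) = psign \<nu> * (\<Prod>i<n. psign (\<sigma> i))"
proof -
  define U where "U = \<Union>(\<sigma> ` {..<n})"
  have UP: "U \<in> Part I" using U_part[OF nu fI n sig] unfolding U_def by blast
  note pv = part_props[OF nu fI]
  note pU = part_props[OF UP fI]
  have sb: "set (blocks \<nu>) = \<nu>" "distinct (blocks \<nu>)" using bl_props pv by auto
  have bi: "blocks \<nu> ! i \<in> \<nu>" if "i < n" for i using sb that n nth_mem by blast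
  have fbi: "finite (blocks \<nu> ! i)" if "i < n" for i using bi that pv by blast
  have si: "\<sigma> i \<in> Part (blocks \<nu> ! i)" if "i < n" for i using sig that by auto
  note ps = part_props[OF si fbi]
  define bl where "bl = block_lists \<nu>"
  have lbl: "length bl = n" using bl_props(5)[OF pv(1)] pv(3) n unfolding bl_def by auto
  define Ls where "Ls = map (\<lambda>i. block_lists (\<sigma> i)) [0..<n]"
  define zss where "zss = map concat Ls"
  define xs where "xs = concat (block_lists U)"
  define zs where "zs = concat zss"
  define ys where "ys = concat bl"
  define s where "s = sorted_list_of_set I"
  have dx: "distinct xs" unfolding xs_def using distinct_concat_bl pU by blast
  have sx: "set xs = I" unfolding xs_def using bl_props(7)[OF pU(1)] pU by blast
  have dy: "distinct ys" unfolding ys_def bl_def using distinct_concat_bl pv by blast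
  have sy: "set ys = I" unfolding ys_def bl_def using bl_props(7)[OF pv(1)] pv by blast
  have ds: "distinct s" "set s = I" unfolding s_def using fI by auto
  have mxs: "mset xs = mset s" using dx ds sx set_eq_iff_mset_eq_distinct by metis
  have mys: "mset ys = mset s" using dy ds sy set_eq_iff_mset_eq_distinct by metis
  have zi: "distinct (zss ! i) \<and> set (zss ! i) = blocks \<nu> ! i" if "i < n" for i
  proof -
    have "zss ! i = concat (block_lists (\<sigma> i))" unfolding zss_def Ls_def using that by simp
    thus ?thesis using distinct_concat_bl[of "\<sigma> i"] ps[OF that] bl_props(7)[of "\<sigma> i"] that by auto
  qed
  have bli: "bl ! i = sorted_list_of_set (blocks \<nu> ! i)" if "i < n" for i
    unfolding bl_def using bl_props(6)[OF pv(1)] pv(3) that n by blast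
  have mzi: "mset (zss ! i) = mset (bl ! i)" if "i < n" for i
    using zi[OF that] bli[OF that] fbi[OF that] set_eq_iff_mset_eq_distinct
    by (metis distinct_sorted_list_of_set set_sorted_list_of_set)
  have lz: "length zss = n" unfolding zss_def Ls_def by simp
  have "map mset zss = map mset bl" by (rule nth_equalityI) (use mzi lz lbl in auto)
  hence mzy: "mset zs = mset ys"
    unfolding zs_def ys_def by (simp add: mset_concat sum_mset_sum_list[symmetric] flip: map_map)
  have dL: "distinct (concat Ls)"
  proof (rule distinct_concat)
    have "inj_on (\<lambda>i. block_lists (\<sigma> i)) {0..<n}"
    proof (rule inj_onI)
      fix i j assume ij: "i \<in> {0..<n}" "j \<in> {0..<n}" "block_lists (\<sigma> i) = block_lists (\<sigma> j)"
      have "blocks \<nu> ! i \<noteq> {}" using bi[of i] pv(3) ij by auto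
      hence "\<sigma> i \<noteq> {}" using ps(2)[of i] ij by auto
      then obtain B where B: "B \<in> \<sigma> i" by blast
      have "sorted_list_of_set B \<in> set (block_lists (\<sigma> i))"
        using B ij(1) bl_props(1)[OF ps(1)[of i]] ps(3)[of i] by auto
      hence "sorted_list_of_set B \<in> set (block_lists (\<sigma> j))" using ij(3) by simp
      then obtain C where C: "C \<in> \<sigma> j" "sorted_list_of_set B = sorted_list_of_set C"
        using bl_props(1)[OF ps(1)] ps(3) ij by auto
      have "B = C" using C B ps(3) ij by (metis atLeastLessThan_iff sorted_list_of_set.set_sorted_key_list_of_set)
      hence "B \<subseteq> blocks \<nu> ! i \<inter> blocks \<nu> ! j" "B \<noteq> {}" using B C ps(3) ij by auto
      thus "i = j" using blocks_disj[OF nu fI, of i j] ij n by auto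
    qed
    thus "distinct Ls" unfolding Ls_def by (simp add: distinct_map)
  next
    fix l assume "l \<in> set Ls"
    then obtain i where "i < n" "l = block_lists (\<sigma> i)" unfolding Ls_def by auto
    thus "distinct l" using bl_props(2)[OF ps(1)] ps(3) by auto
  next
    fix l l' assume h: "l \<in> set Ls" "l' \<in> set Ls" "l \<noteq> l'"
    then obtain i j where ij: "i < n" "l = block_lists (\<sigma> i)" "j < n" "l' = block_lists (\<sigma> j)"
      unfolding Ls_def by auto
    hence "i \<noteq> j" using h by auto
    show "set l \<inter> set l' = {}"
    proof (rule ccontr)
      assume "set l \<inter> set l' \<noteq> {}"
      then obtain B C where "B \<in> \<sigma> i" "C \<in> \<sigma> j" "sorted_list_of_set B = sorted_list_of_set C"
        using ij bl_props(1)[OF ps(1)[of i]] ps(3)[of i] bl_props(1)[OF ps(1)[of j]] ps(3)[of j] by auto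
      moreover hence "B = C" using ij ps(3) by (metis sorted_list_of_set.set_sorted_key_list_of_set)
      ultimately have "B \<subseteq> blocks \<nu> ! i \<inter> blocks \<nu> ! j" "B \<noteq> {}" using ij ps(3) by auto
      thus False using blocks_disj[OF nu fI, of i j] ij n \<open>i \<noteq> j\<close> by auto
    qed
  qed
  have "set (concat Ls) = sorted_list_of_set ` U"
  proof -
    have "set (concat Ls) = (\<Union>i<n. set (block_lists (\<sigma> i)))" unfolding Ls_def by auto
    also have "\<dots> = (\<Union>i<n. sorted_list_of_set ` \<sigma> i)"
    proof (rule SUP_cong)
      fix i assume "i \<in> {..<n}"
      thus "set (block_lists (\<sigma> i)) = sorted_list_of_set ` \<sigma> i" using bl_props(1)[OF ps(1)[of i]] ps(3)[of i] by blast
    qed simp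
    also have "\<dots> = sorted_list_of_set ` U" unfolding U_def by (simp add: image_UN)
    finally show ?thesis .
  qed
  moreover have "set (block_lists U) = sorted_list_of_set ` U" "distinct (block_lists U)"
    using bl_props(1,2)[OF pU(1)] pU(3) by auto
  ultimately have mL: "mset (block_lists U) = mset (concat Ls)"
    using dL set_eq_iff_mset_eq_distinct[of "block_lists U" "concat Ls"] by simp
  have czs: "concat (concat Ls) = zs" unfolding zs_def zss_def by (simp add: concat_concat')
  have mxz: "mset xs = mset zs" using mset_concat_eq[OF mL] czs xs_def by simp
  have dz: "distinct zs" using dx mxz mset_eq_imp_distinct_iff by metis
  have evl: "\<forall>l\<in>set (block_lists U). even (length l)"
    using bl_props(1)[OF pU(1)] pU(3) ev unfolding U_def by auto
  have s1: "sgnl xs zs = 1"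
    using sgnl_even_blocks[OF _ mL evl] dx czs unfolding xs_def by simp
  have s2: "sgnl zs ys = (\<Prod>i<n. psign (\<sigma> i))"
  proof -
    have "sgnl zs ys = (\<Prod>i<length zss. sgnl (zss ! i) (bl ! i))"
      unfolding zs_def ys_def
    proof (rule sgnl_concat)
      show "length zss = length bl" using lz lbl by simp
      show "distinct (concat zss)" using dz unfolding zs_def .
      show "\<forall>i<length zss. mset (zss ! i) = mset (bl ! i)" using mzi lz by simp
    qed
    also have "\<dots> = (\<Prod>i<n. psign (\<sigma> i))"
    proof (rule prod.cong)
      fix i assume i: "i \<in> {..<n}"
      have "zss ! i = concat (block_lists (\<sigma> i))" unfolding zss_def Ls_def using i by simp
      moreover have "bl ! i = sorted_list_of_set (\<Union>(\<sigma> i))" using bli[of i] ps(2)[of i] i by simp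
      ultimately show "sgnl (zss ! i) (bl ! i) = psign (\<sigma> i)" by (simp add: psign_sgnl)
    qed (use lz in auto)
    finally show ?thesis .
  qed
  have s3: "sgnl ys s = psign \<nu>" unfolding ys_def s_def bl_def using pv(2) by (simp add: psign_sgnl)
  have "psign U = sgnl xs s" unfolding xs_def s_def using pU(2) by (simp add: psign_sgnl)
  also have "\<dots> = sgnl xs zs * sgnl zs s" by (rule sgnl_trans[OF dx mxz]) (simp add: mzy mys)
  also have "sgnl zs s = sgnl zs ys * sgnl ys s" using sgnl_trans[OF dz mzy mys] .
  finally have "psign U = psign \<nu> * (\<Prod>i<n. psign (\<sigma> i))" using s1 s2 s3 by simp
  thus ?thesis unfolding U_def .
qed

lemma ml_in:
  assumes "multilinear_on Es T f" "length xs = length Es" "\<forall>i<length Es. xs ! i \<in> Es ! i"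
  shows "f xs \<in> T"
  using assms unfolding multilinear_on_def by blast

lemma ml_lin:
  assumes "multilinear_on Es T f" "length xs = length Es" "\<forall>i<length Es. xs ! i \<in> Es ! i"
    "i < length Es" "y \<in> Es ! i" "z \<in> Es ! i"
  shows "f (xs[i := a *\<^sub>R y + b *\<^sub>R z]) = a *\<^sub>R f (xs[i := y]) + b *\<^sub>R f (xs[i := z])"
  using assms unfolding multilinear_on_def by blast

lemma ml_zero:
  assumes "multilinear_on Es T f" "length xs = length Es" "\<forall>i<length Es. xs ! i \<in> Es ! i"
    "i < length Es"
  shows "f (xs[i := 0]) = 0"
  using ml_lin[OF assms, of "xs ! i" "xs ! i" 0 0] assms by simp

lemma ml_zero':
  assumes "multilinear_on Es T f" "length xs = length Es" "\<forall>i<length Es. xs ! i \<in> Es ! i"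
    "i < length Es" "xs ! i = 0"
  shows "f xs = 0"
  using ml_zero[OF assms(1-4)] assms(5) by (metis list_update_id)

lemma ml_sum:
  assumes "multilinear_on Es T f" "length xs = length Es" "\<forall>i<length Es. xs ! i \<in> Es ! i"
    "i < length Es" "subspace (Es ! i)" "finite A" "\<forall>a\<in>A. y a \<in> Es ! i"
  shows "f (xs[i := (\<Sum>a\<in>A. c a *\<^sub>R y a)]) = (\<Sum>a\<in>A. c a *\<^sub>R f (xs[i := y a]))"
  using assms(6,7)
proof (induction A rule: finite_induct)
  case empty thus ?case using ml_zero[OF assms(1-4)] by simp
next
  case (insert x F)
  have inF: "(\<Sum>a\<in>F. c a *\<^sub>R y a) \<in> Es ! i"
    using insert.prems assms(5) by (intro subspace_sum subspace_scale) auto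
  have "(\<Sum>a\<in>insert x F. c a *\<^sub>R y a) = c x *\<^sub>R y x + 1 *\<^sub>R (\<Sum>a\<in>F. c a *\<^sub>R y a)"
    using insert by simp
  hence "f (xs[i := (\<Sum>a\<in>insert x F. c a *\<^sub>R y a)]) =
      c x *\<^sub>R f (xs[i := y x]) + 1 *\<^sub>R f (xs[i := (\<Sum>a\<in>F. c a *\<^sub>R y a)])"
    using ml_lin[OF assms(1-4), of "y x" "\<Sum>a\<in>F. c a *\<^sub>R y a" "c x" 1] inF insert.prems by simp
  thus ?case using insert by simp
qed

lemma ml_expand_gen:
  assumes ml: "multilinear_on Es T f" and n: "n = length Es"
    and sub: "\<forall>i<n. subspace (Es ! i)" and fin: "\<forall>i<n. finite (A i)"
    and y: "\<forall>i<n. \<forall>a\<in>A i. y i a \<in> Es ! i"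
  shows "m \<le> n \<Longrightarrow> length zs = n \<Longrightarrow> \<forall>i<n. zs ! i \<in> Es ! i \<Longrightarrow>
    f (map (\<lambda>i. if i < m then (\<Sum>a\<in>A i. c i a *\<^sub>R y i a) else zs ! i) [0..<n]) =
    (\<Sum>\<sigma>\<in>PiE {..<m} A. (\<Prod>i<m. c i (\<sigma> i)) *\<^sub>R f (map (\<lambda>i. if i < m then y i (\<sigma> i) else zs ! i) [0..<n]))"
proof (induction m arbitrary: zs)
  case 0
  have "map (\<lambda>i. zs ! i) [0..<n] = zs" using 0 map_nth[of zs] by simp
  thus ?case by simp
next
  case (Suc m)
  define S where "S = (\<Sum>a\<in>A m. c m a *\<^sub>R y m a)"
  have mn: "m < n" using Suc by simp
  have Sin: "S \<in> Es ! m" unfolding S_def using sub y mn by (intro subspace_sum subspace_scale) auto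
  define zs' where "zs' = zs[m := S]"
  have zs': "length zs' = n" "\<forall>i<n. zs' ! i \<in> Es ! i"
    unfolding zs'_def using Suc.prems Sin by (auto simp: nth_list_update)
  define L where "L = (\<lambda>\<sigma>. map (\<lambda>i. if i < m then y i (\<sigma> i) else zs ! i) [0..<n])"
  have "map (\<lambda>i. if i < Suc m then (\<Sum>a\<in>A i. c i a *\<^sub>R y i a) else zs ! i) [0..<n] =
        map (\<lambda>i. if i < m then (\<Sum>a\<in>A i. c i a *\<^sub>R y i a) else zs' ! i) [0..<n]"
    unfolding zs'_def S_def using Suc.prems by (intro map_cong) (auto simp: nth_list_update)
  note eqm = this
  have "f (map (\<lambda>i. if i < Suc m then (\<Sum>a\<in>A i. c i a *\<^sub>R y i a) else zs ! i) [0..<n]) =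
    (\<Sum>\<sigma>\<in>PiE {..<m} A. (\<Prod>i<m. c i (\<sigma> i)) *\<^sub>R f (map (\<lambda>i. if i < m then y i (\<sigma> i) else zs' ! i) [0..<n]))"
    unfolding eqm using Suc.IH[OF _ zs'] Suc.prems by simp
  also have "\<dots> = (\<Sum>\<sigma>\<in>PiE {..<m} A. (\<Prod>i<m. c i (\<sigma> i)) *\<^sub>R f ((L \<sigma>)[m := S]))"
  proof (rule sum.cong)
    fix \<sigma> assume "\<sigma> \<in> PiE {..<m} A"
    have "map (\<lambda>i. if i < m then y i (\<sigma> i) else zs' ! i) [0..<n] = (L \<sigma>)[m := S]"
      unfolding L_def zs'_def by (rule nth_equalityI) (use Suc.prems in \<open>auto simp: nth_list_update\<close>)
    thus "(\<Prod>i<m. c i (\<sigma> i)) *\<^sub>R f (map (\<lambda>i. if i < m then y i (\<sigma> i) else zs' ! i) [0..<n]) =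
      (\<Prod>i<m. c i (\<sigma> i)) *\<^sub>R f ((L \<sigma>)[m := S])" by simp
  qed simp
  also have "\<dots> = (\<Sum>\<sigma>\<in>PiE {..<m} A. \<Sum>a\<in>A m. ((\<Prod>i<m. c i (\<sigma> i)) * c m a) *\<^sub>R f ((L \<sigma>)[m := y m a]))"
  proof (rule sum.cong)
    fix \<sigma> assume s: "\<sigma> \<in> PiE {..<m} A"
    have vL: "length (L \<sigma>) = length Es" "\<forall>i<length Es. L \<sigma> ! i \<in> Es ! i"
      unfolding L_def using Suc.prems y s n by (auto simp: PiE_iff)
    have "f ((L \<sigma>)[m := S]) = (\<Sum>a\<in>A m. c m a *\<^sub>R f ((L \<sigma>)[m := y m a]))"
      unfolding S_def by (rule ml_sum[OF ml vL]) (use mn n sub fin y in auto)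
    thus "(\<Prod>i<m. c i (\<sigma> i)) *\<^sub>R f ((L \<sigma>)[m := S]) =
      (\<Sum>a\<in>A m. ((\<Prod>i<m. c i (\<sigma> i)) * c m a) *\<^sub>R f ((L \<sigma>)[m := y m a]))"
      by (simp add: scaleR_sum_right)
  qed simp
  also have "\<dots> = (\<Sum>(a, \<sigma>)\<in>A m \<times> PiE {..<m} A. ((\<Prod>i<m. c i (\<sigma> i)) * c m a) *\<^sub>R f ((L \<sigma>)[m := y m a]))"
    by (subst sum.swap) (simp add: sum.cartesian_product)
  also have "\<dots> = (\<Sum>\<tau>\<in>PiE {..<Suc m} A. (\<Prod>i<Suc m. c i (\<tau> i)) *\<^sub>R
        f (map (\<lambda>i. if i < Suc m then y i (\<tau> i) else zs ! i) [0..<n]))"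
  proof (rule sum.reindex_bij_witness[of _ "\<lambda>\<tau>. (\<tau> m, \<tau>(m := undefined))" "\<lambda>(a, \<sigma>). \<sigma>(m := a)"])
    fix \<tau> assume t: "\<tau> \<in> PiE {..<Suc m} A"
    show "(case (\<tau> m, \<tau>(m := undefined)) of (a, \<sigma>) \<Rightarrow> \<sigma>(m := a)) = \<tau>" by simp
    show "(\<tau> m, \<tau>(m := undefined)) \<in> A m \<times> PiE {..<m} A" using t by (auto simp: PiE_iff extensional_def)
  next
    fix p assume p: "p \<in> A m \<times> PiE {..<m} A"
    obtain a \<sigma> where pe[simp]: "p = (a, \<sigma>)" by (cases p)
    have sg: "\<sigma> \<in> PiE {..<m} A" "a \<in> A m" using p by auto
    show "(case p of (a, \<sigma>) \<Rightarrow> \<sigma>(m := a)) \<in> PiE {..<Suc m} A"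
      using p by (auto simp: PiE_iff extensional_def)
    show "((case p of (a, \<sigma>) \<Rightarrow> \<sigma>(m := a)) m, (case p of (a, \<sigma>) \<Rightarrow> \<sigma>(m := a))(m := undefined)) = p"
      using p by (auto simp: PiE_iff extensional_def fun_eq_iff)
    have "(\<Prod>i<Suc m. c i ((\<sigma>(m := a)) i)) = (\<Prod>i<m. c i (\<sigma> i)) * c m a"
      by (simp add: prod.lessThan_Suc)
    moreover have "(L \<sigma>)[m := y m a] =
        map (\<lambda>i. if i < Suc m then y i ((\<sigma>(m := a)) i) else zs ! i) [0..<n]"
      unfolding L_def by (rule nth_equalityI) (use Suc.prems in \<open>auto simp: nth_list_update\<close>)
    ultimately show "(\<Prod>i<Suc m. c i ((case p of (a, \<sigma>) \<Rightarrow> \<sigma>(m := a)) i)) *\<^sub>R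
        f (map (\<lambda>i. if i < Suc m then y i ((case p of (a, \<sigma>) \<Rightarrow> \<sigma>(m := a)) i) else zs ! i) [0..<n]) =
      (case p of (a, \<sigma>) \<Rightarrow> ((\<Prod>i<m. c i (\<sigma> i)) * c m a) *\<^sub>R f ((L \<sigma>)[m := y m a]))"
      unfolding pe prod.case by simp
  qed
  finally show ?case .
qed

lemma sum_single:
  assumes "finite A" "x \<in> A" "\<forall>y\<in>A - {x}. g y = 0"
  shows "sum g A = g x"
  using sum.mono_neutral_right[of A "{x}" g] assms by simp

definition restr :: "nat set set \<Rightarrow> (nat set \<Rightarrow> 'a::zero) \<Rightarrow> nat set \<Rightarrow> 'a" where
  "restr S v = (\<lambda>J. if J \<in> S then v J else 0)"

lemma Pk_fin: "I \<in> Pk k \<Longrightarrow> finite I"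
  unfolding Pk_def using finite_subset by blast

lemma Part_Pk: "I \<in> Pk k \<Longrightarrow> \<nu> \<in> Part I \<Longrightarrow> B \<in> \<nu> \<Longrightarrow> B \<in> Pk k"
  using part_props(3)[of \<nu> I B] Pk_fin[of I k] unfolding Pk_def by auto

lemma blocks_in:
  assumes "I \<in> Pk k" "\<nu> \<in> Part I"
  shows "set (blocks \<nu>) = \<nu>" "\<And>i. i < length (blocks \<nu>) \<Longrightarrow> blocks \<nu> ! i \<in> \<nu>"
    "\<And>i. i < length (blocks \<nu>) \<Longrightarrow> blocks \<nu> ! i \<in> Pk k"
proof -
  note pv = part_props[OF assms(2) Pk_fin[OF assms(1)]]
  show s: "set (blocks \<nu>) = \<nu>" using bl_props(3) pv by blast
  fix i assume "i < length (blocks \<nu>)"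
  thus "blocks \<nu> ! i \<in> \<nu>" using s nth_mem by blast
  thus "blocks \<nu> ! i \<in> Pk k" using Part_Pk assms by blast
qed

lemma mor_ml: "mor k E E' F \<Longrightarrow> I \<in> Pk k \<Longrightarrow> \<nu> \<in> Part I \<Longrightarrow>
    multilinear_on (map E (blocks \<nu>)) (E' I) (F \<nu>)"
  unfolding mor_def by blast

lemma valid_map:
  assumes "I \<in> Pk k" "\<nu> \<in> Part I" "\<forall>B\<in>\<nu>. w B \<in> E B"
  shows "length (map w (blocks \<nu>)) = length (map E (blocks \<nu>))"
    "\<forall>i<length (map E (blocks \<nu>)). map w (blocks \<nu>) ! i \<in> map E (blocks \<nu>) ! i"
  using blocks_in[OF assms(1,2)] assms(3) by auto

lemma term_in:
  assumes "mor k E E' F" "I \<in> Pk k" "\<nu> \<in> Part I" "\<forall>B\<in>\<nu>. w B \<in> E B"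
  shows "F \<nu> (map w (blocks \<nu>)) \<in> E' I"
  using ml_in[OF mor_ml[OF assms(1-3)] valid_map[OF assms(2-4)]] .

lemma term_zero:
  assumes "mor k E E' F" "I \<in> Pk k" "\<nu> \<in> Part I" "\<forall>B\<in>\<nu>. w B \<in> E B" "B \<in> \<nu>" "w B = 0"
  shows "F \<nu> (map w (blocks \<nu>)) = 0"
proof -
  obtain i where i: "i < length (blocks \<nu>)" "blocks \<nu> ! i = B"
    using blocks_in(1)[OF assms(2,3)] assms(5) by (metis in_set_conv_nth)
  show ?thesis
    by (rule ml_zero'[OF mor_ml[OF assms(1-3)] valid_map[OF assms(2-4)], of i]) (use i assms(6) in auto)
qed

lemma cube_zero: "cube k E \<Longrightarrow> J \<in> Pk k \<Longrightarrow> 0 \<in> E J"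
  unfolding cube_def using subspace_0 by blast

lemma total_restr: "cube k E \<Longrightarrow> v \<in> total k E \<Longrightarrow> restr S v \<in> total k E"
  unfolding total_def restr_def using cube_zero by fastforce

lemma total_in: "v \<in> total k E \<Longrightarrow> J \<in> Pk k \<Longrightarrow> v J \<in> E J"
  unfolding total_def by blast

lemma total_out: "v \<in> total k E \<Longrightarrow> J \<notin> Pk k \<Longrightarrow> v J = 0"
  unfolding total_def by blast

lemma mor_app_total:
  assumes "mor k E E' F" "cube k E'" "v \<in> total k E"
  shows "mor_app k F v \<in> total k E'"
  unfolding total_def mem_Collect_eq
proof (intro conjI ballI allI impI)
  fix I assume I: "I \<in> Pk k"
  have "subspace (E' I)" using assms(2) I unfolding cube_def by blast
  moreover have "F \<nu> (map v (blocks \<nu>)) \<in> E' I" if "\<nu> \<in> Part I" for \<nu>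
    using term_in[OF assms(1) I that] total_in[OF assms(3)] Part_Pk[OF I that] by blast
  ultimately show "mor_app k F v I \<in> E' I" unfolding mor_app_def using I
    by (simp add: subspace_sum)
next
  fix I assume "I \<notin> Pk k" thus "mor_app k F v I = 0" unfolding mor_app_def by simp
qed

lemma mor_restr:
  assumes "mor k E E' K" "cube k E" "v \<in> total k E" "J \<in> Pk k" "disjoint S"
    "\<pi> \<in> Part J" "\<pi> \<subseteq> S"
  shows "mor_app k K (restr S v) J = K \<pi> (map v (blocks \<pi>))"
proof -
  have rv: "restr S v \<in> total k E" using total_restr assms(2,3) .
  have "mor_app k K (restr S v) J = (\<Sum>\<rho>\<in>Part J. K \<rho> (map (restr S v) (blocks \<rho>)))"
    using assms(4) by (simp add: mor_app_def)
  also have "\<dots> = K \<pi> (map (restr S v) (blocks \<pi>))"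
  proof (rule sum_single)
    show "finite (Part J)" using finite_Part Pk_fin assms(4) by blast
    show "\<pi> \<in> Part J" by fact
    show "\<forall>\<rho>\<in>Part J - {\<pi>}. K \<rho> (map (restr S v) (blocks \<rho>)) = 0"
    proof
      fix \<rho> assume r: "\<rho> \<in> Part J - {\<pi>}"
      have "\<not> \<rho> \<subseteq> S" using part_sub_eq[of \<rho> J \<pi> S] r assms by blast
      then obtain B where B: "B \<in> \<rho>" "B \<notin> S" by blast
      have r': "\<rho> \<in> Part J" using r by blast
      have val: "\<forall>B'\<in>\<rho>. restr S v B' \<in> E B'" using rv total_in Part_Pk[OF assms(4) r'] by blast
      have z: "restr S v B = 0" using B by (simp add: restr_def)
      show "K \<rho> (map (restr S v) (blocks \<rho>)) = 0" by (rule term_zero[OF assms(1,4) r' val B(1) z])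
    qed
  qed
  also have "map (restr S v) (blocks \<pi>) = map v (blocks \<pi>)"
    using blocks_in(1)[OF assms(4,6)] assms(7) by (auto simp: restr_def)
  finally show ?thesis .
qed

lemma mor_restr0:
  assumes "mor k E E' K" "cube k E" "v \<in> total k E" "J \<in> Pk k" "\<not> (\<exists>\<pi>\<in>Part J. \<pi> \<subseteq> S)"
  shows "mor_app k K (restr S v) J = 0"
proof -
  have rv: "restr S v \<in> total k E" using total_restr assms(2,3) .
  have "mor_app k K (restr S v) J = (\<Sum>\<rho>\<in>Part J. K \<rho> (map (restr S v) (blocks \<rho>)))"
    using assms(4) by (simp add: mor_app_def)
  also have "\<dots> = 0"
  proof (rule sum.neutral, rule ballI)
    fix \<rho> assume r: "\<rho> \<in> Part J"
    have "\<not> \<rho> \<subseteq> S" using r assms(5) by blast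
    then obtain B where B: "B \<in> \<rho>" "B \<notin> S" by blast
    have val: "\<forall>B'\<in>\<rho>. restr S v B' \<in> E B'" using rv total_in Part_Pk[OF assms(4) r] by blast
    have z: "restr S v B = 0" using B by (simp add: restr_def)
    show "K \<rho> (map (restr S v) (blocks \<rho>)) = 0" by (rule term_zero[OF assms(1,4) r val B(1) z])
  qed
  finally show ?thesis .
qed

lemma msign_expand:
  assumes "mor k E E' K" "cube k E" "v \<in> total k E" "I \<in> Pk k"
  shows "mor_app k (msign K) v I = (\<Sum>\<mu>\<in>Part I. of_int (psign \<mu>) *\<^sub>R mor_app k K (restr \<mu> v) I)"
proof -
  have "mor_app k (msign K) v I = (\<Sum>\<mu>\<in>Part I. msign K \<mu> (map v (blocks \<mu>)))"
    using assms(4) by (simp add: mor_app_def)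
  also have "\<dots> = (\<Sum>\<mu>\<in>Part I. of_int (psign \<mu>) *\<^sub>R mor_app k K (restr \<mu> v) I)"
  proof (rule sum.cong)
    fix \<mu> assume m: "\<mu> \<in> Part I"
    have "disjoint \<mu>" using part_props(4)[OF m Pk_fin[OF assms(4)]] .
    thus "msign K \<mu> (map v (blocks \<mu>)) = of_int (psign \<mu>) *\<^sub>R mor_app k K (restr \<mu> v) I"
      using mor_restr[OF assms(1-4) _ m] by (simp add: msign_def)
  qed simp
  finally show ?thesis .
qed

lemma psign_single: "finite I \<Longrightarrow> psign {I} = 1"
  unfolding psign_sgnl block_lists_def using sgnl_refl by simp

lemma part_single:
  assumes "I \<in> Pk k"
  shows "{I} \<in> Part I" "\<And>\<mu>. \<mu> \<in> Part I \<Longrightarrow> I \<in> \<mu> \<Longrightarrow> \<mu> = {I}"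
proof -
  show "{I} \<in> Part I" using assms unfolding Part_def Pk_def partition_on_def by auto
  fix \<mu> assume m: "\<mu> \<in> Part I" "I \<in> \<mu>"
  note pm = part_props[OF m(1) Pk_fin[OF assms]]
  have "B = I" if "B \<in> \<mu>" for B
  proof (rule ccontr)
    assume "B \<noteq> I"
    hence "B \<inter> I = {}" using pm(4) that m(2) by (auto simp: disjoint_def)
    thus False using pm(3)[OF that] by blast
  qed
  thus "\<mu> = {I}" using m(2) by blast
qed

lemma single_sum:
  fixes h :: "'a::zero \<Rightarrow> 'b::real_vector"
  assumes "I \<in> Pk k" "h 0 = 0"
  shows "(\<Sum>\<mu>\<in>Part I. of_int (psign \<mu>) *\<^sub>R h (restr \<mu> v I)) = h (v I)"
proof -
  have "(\<Sum>\<mu>\<in>Part I. of_int (psign \<mu>) *\<^sub>R h (restr \<mu> v I)) =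
      of_int (psign {I}) *\<^sub>R h (restr {I} v I)"
  proof (rule sum_single)
    show "finite (Part I)" using finite_Part Pk_fin assms(1) by blast
    show "{I} \<in> Part I" using part_single assms(1) by blast
    show "\<forall>\<mu>\<in>Part I - {{I}}. of_int (psign \<mu>) *\<^sub>R h (restr \<mu> v I) = 0"
      using part_single(2)[OF assms(1)] assms(2) by (auto simp: restr_def)
  qed
  thus ?thesis using psign_single Pk_fin assms(1) by (simp add: restr_def)
qed

lemma ml_expand:
  assumes ml: "multilinear_on Es T f" and n: "n = length Es"
    and sub: "\<forall>i<n. subspace (Es ! i)" and fin: "\<forall>i<n. finite (A i)"
    and y: "\<forall>i<n. \<forall>a\<in>A i. y i a \<in> Es ! i"
  shows "f (map (\<lambda>i. \<Sum>a\<in>A i. c i a *\<^sub>R y i a) [0..<n]) =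
    (\<Sum>\<sigma>\<in>PiE {..<n} A. (\<Prod>i<n. c i (\<sigma> i)) *\<^sub>R f (map (\<lambda>i. y i (\<sigma> i)) [0..<n]))"
proof -
  define zs where "zs = map (\<lambda>i. \<Sum>a\<in>A i. c i a *\<^sub>R y i a) [0..<n]"
  have zs: "length zs = n" "\<forall>i<n. zs ! i \<in> Es ! i"
    unfolding zs_def using sub y by (auto intro!: subspace_sum subspace_scale)
  have e1: "map (\<lambda>i. \<Sum>a\<in>A i. c i a *\<^sub>R y i a) [0..<n] =
      map (\<lambda>i. if i < n then (\<Sum>a\<in>A i. c i a *\<^sub>R y i a) else zs ! i) [0..<n]" by simp
  have e2: "\<And>\<sigma>. map (\<lambda>i. y i (\<sigma> i)) [0..<n] = map (\<lambda>i. if i < n then y i (\<sigma> i) else zs ! i) [0..<n]"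
    by simp
  show ?thesis unfolding e1 e2 by (rule ml_expand_gen[OF ml n sub fin y order.refl zs])
qed

lemma cube_prod: "cube k E \<Longrightarrow> cube k E' \<Longrightarrow> cube k (prod_cube E E')"
  unfolding cube_def prod_cube_def by (simp add: subspace_Times)

lemma pe_cube: "purely_even k E \<Longrightarrow> cube k E"
  unfolding purely_even_def by blast

lemma part_id:
  assumes "cube k E" "mor k E E Idf" "\<forall>v\<in>total k E. mor_app k Idf v = v" "v \<in> total k E"
  shows "mor_app k (msign Idf) v = v"
proof
  fix I show "mor_app k (msign Idf) v I = v I"
  proof (cases "I \<in> Pk k")
    case True
    have "mor_app k (msign Idf) v I = (\<Sum>\<mu>\<in>Part I. of_int (psign \<mu>) *\<^sub>R mor_app k Idf (restr \<mu> v) I)"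
      using msign_expand[OF assms(2,1,4) True] .
    also have "\<dots> = (\<Sum>\<mu>\<in>Part I. of_int (psign \<mu>) *\<^sub>R id (restr \<mu> v I))"
      using assms(3) total_restr[OF assms(1,4)] by simp
    also have "\<dots> = id (v I)" by (rule single_sum[OF True]) simp
    finally show ?thesis by simp
  next
    case False thus ?thesis using total_out[OF assms(4) False] by (simp add: mor_app_def)
  qed
qed

lemma part_proj:
  assumes "cube k E" "mor k E E' P" "\<forall>v\<in>total k E. mor_app k P v = (\<lambda>I. h (v I))"
    "v \<in> total k E" "h 0 = 0"
  shows "mor_app k (msign P) v = (\<lambda>I. h (v I))"
proof
  fix I show "mor_app k (msign P) v I = h (v I)"
  proof (cases "I \<in> Pk k")
    case True
    have "mor_app k (msign P) v I = (\<Sum>\<mu>\<in>Part I. of_int (psign \<mu>) *\<^sub>R mor_app k P (restr \<mu> v) I)"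
      using msign_expand[OF assms(2,1,4) True] .
    also have "\<dots> = (\<Sum>\<mu>\<in>Part I. of_int (psign \<mu>) *\<^sub>R h (restr \<mu> v I))"
      using assms(3) total_restr[OF assms(1,4)] by simp
    also have "\<dots> = h (v I)" by (rule single_sum[where h=h, OF True assms(5)])
    finally show ?thesis .
  next
    case False thus ?thesis using total_out[OF assms(4) False] assms(5) by (simp add: mor_app_def)
  qed
qed

lemma part_pair:
  assumes "cube k E" "mor k E E' F" "mor k E E'' G" "mor k E (prod_cube E' E'') H"
    "\<forall>v\<in>total k E. mor_app k H v = (\<lambda>I. (mor_app k F v I, mor_app k G v I))" "v \<in> total k E"
  shows "mor_app k (msign H) v = (\<lambda>I. (mor_app k (msign F) v I, mor_app k (msign G) v I))"
proof
  fix I show "mor_app k (msign H) v I = (mor_app k (msign F) v I, mor_app k (msign G) v I)"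
  proof (cases "I \<in> Pk k")
    case True
    have "mor_app k (msign H) v I = (\<Sum>\<mu>\<in>Part I. of_int (psign \<mu>) *\<^sub>R mor_app k H (restr \<mu> v) I)"
      using msign_expand[OF assms(4,1,6) True] .
    also have "\<dots> = (\<Sum>\<mu>\<in>Part I. of_int (psign \<mu>) *\<^sub>R
        (mor_app k F (restr \<mu> v) I, mor_app k G (restr \<mu> v) I))"
      using assms(5) total_restr[OF assms(1,6)] by simp
    also have "\<dots> = (mor_app k (msign F) v I, mor_app k (msign G) v I)"
      unfolding msign_expand[OF assms(2,1,6) True] msign_expand[OF assms(3,1,6) True]
      by (simp add: fst_sum snd_sum prod_eq_iff)
    finally show ?thesis .
  next
    case False thus ?thesis by (simp add: mor_app_def zero_prod_def)
  qed
qed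

lemma psign_sq: "psign \<nu> * psign \<nu> = 1"
  by (simp add: psign_def)

lemma msign_msign: "msign (msign F) = F"
proof (intro ext)
  fix \<nu> xs
  have "real_of_int (psign \<nu>) * real_of_int (psign \<nu>) = 1"
    using psign_sq[of \<nu>] by (metis of_int_1 of_int_mult)
  thus "msign (msign F) \<nu> xs = F \<nu> xs" by (simp add: msign_def)
qed

lemma mor_msign:
  assumes "cube k E'" "mor k E E' F"
  shows "mor k E E' (msign F)"
  unfolding mor_def
proof (intro ballI)
  fix I \<nu> assume I: "I \<in> Pk k" and nu: "\<nu> \<in> Part I"
  have ml: "multilinear_on (map E (blocks \<nu>)) (E' I) (F \<nu>)" using mor_ml[OF assms(2) I nu] .
  have sub: "subspace (E' I)" using assms(1) I unfolding cube_def by blast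
  show "multilinear_on (map E (blocks \<nu>)) (E' I) (msign F \<nu>)"
    unfolding multilinear_on_def msign_def
    using ml_in[OF ml] ml_lin[OF ml] sub by (auto simp: subspace_scale scaleR_add_right mult.commute)
qed

lemma part_comp_nu:
  assumes pe: "purely_even k E" and cE': "cube k E'" and cE'': "cube k E''"
    and F: "mor k E E' F" and G: "mor k E' E'' G" and v: "v \<in> total k E"
    and I: "I \<in> Pk k" and nu: "\<nu> \<in> Part I"
  shows "(\<Sum>\<mu>\<in>Part I. of_int (psign \<mu>) *\<^sub>R G \<nu> (map (mor_app k F (restr \<mu> v)) (blocks \<nu>))) =
    of_int (psign \<nu>) *\<^sub>R G \<nu> (map (mor_app k (msign F) v) (blocks \<nu>))"
proof -
  have cE: "cube k E" using pe pe_cube by blast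
  have fI: "finite I" using Pk_fin I by blast
  define bs where "bs = blocks \<nu>"
  define n where "n = length bs"
  define P where "P = PiE {..<n} (\<lambda>i. Part (bs ! i))"
  define U where "U = (\<lambda>\<sigma>::nat \<Rightarrow> nat set set. \<Union>(\<sigma> ` {..<n}))"
  define T where "T = (\<lambda>\<mu>. G \<nu> (map (mor_app k F (restr \<mu> v)) bs))"
  define T' where "T' = (\<lambda>\<sigma>::nat \<Rightarrow> nat set set. G \<nu> (map (\<lambda>i. F (\<sigma> i) (map v (blocks (\<sigma> i)))) [0..<n]))"
  have bsPk: "bs ! i \<in> Pk k" if "i < n" for i using blocks_in(3)[OF I nu] that unfolding n_def bs_def by blast
  have bsnu: "bs ! i \<in> \<nu>" if "i < n" for i using blocks_in(2)[OF I nu] that unfolding n_def bs_def by blast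
  have ml: "multilinear_on (map E' bs) (E'' I) (G \<nu>)" using mor_ml[OF G I nu] unfolding bs_def .
  have UP: "U \<sigma> \<in> Part I" if "\<sigma> \<in> P" for \<sigma>
    using U_part(1)[OF nu fI refl that[unfolded P_def n_def bs_def]] unfolding U_def n_def bs_def by blast
  have Usel: "{B \<in> U \<sigma>. B \<subseteq> bs ! i} = \<sigma> i" if "\<sigma> \<in> P" "i < n" for \<sigma> i
    using U_part(2)[OF nu fI refl that(1)[unfolded P_def n_def bs_def] that(2)[unfolded n_def bs_def]] unfolding U_def n_def bs_def by blast
  have sP: "\<sigma> i \<in> Part (bs ! i)" if "\<sigma> \<in> P" "i < n" for \<sigma> i using that unfolding P_def by auto
  have vE: "\<forall>B\<in>\<rho>. v B \<in> E B" if "J \<in> Pk k" "\<rho> \<in> Part J" for J \<rho>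
    using total_in[OF v] Part_Pk[OF that] by blast
  have finPi: "\<forall>i<n. finite (Part (bs ! i))" using finite_Part Pk_fin bsPk by blast
  have yin: "\<forall>i<n. \<forall>\<pi>\<in>Part (bs ! i). F \<pi> (map v (blocks \<pi>)) \<in> E' (bs ! i)"
  proof (intro allI impI ballI)
    fix i \<pi> assume a: "i < n" "\<pi> \<in> Part (bs ! i)"
    show "F \<pi> (map v (blocks \<pi>)) \<in> E' (bs ! i)"
      using term_in[OF F bsPk[OF a(1)] a(2) vE[OF bsPk[OF a(1)] a(2)]] .
  qed
  have "map (mor_app k (msign F) v) bs =
      map (\<lambda>i. \<Sum>\<pi>\<in>Part (bs ! i). of_int (psign \<pi>) *\<^sub>R F \<pi> (map v (blocks \<pi>))) [0..<n]"
    by (rule nth_equalityI) (use bsPk in \<open>auto simp: n_def mor_app_def msign_def\<close>)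
  hence "G \<nu> (map (mor_app k (msign F) v) bs) =
      (\<Sum>\<sigma>\<in>P. (\<Prod>i<n. of_int (psign (\<sigma> i))) *\<^sub>R T' \<sigma>)"
    unfolding P_def T'_def
    apply (simp only:)
    apply (rule ml_expand[OF ml])
    using cE' bsPk finPi yin by (auto simp: n_def cube_def)
  hence R: "of_int (psign \<nu>) *\<^sub>R G \<nu> (map (mor_app k (msign F) v) bs) =
      (\<Sum>\<sigma>\<in>P. (of_int (psign \<nu>) * (\<Prod>i<n. of_int (psign (\<sigma> i)))) *\<^sub>R T' \<sigma>)"
    by (simp add: scaleR_sum_right)
  have TU: "T (U \<sigma>) = T' \<sigma>" if s: "\<sigma> \<in> P" for \<sigma>
  proof -
    have dU: "disjoint (U \<sigma>)" using part_props(4)[OF UP[OF s] fI] .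
    have "map (mor_app k F (restr (U \<sigma>) v)) bs = map (\<lambda>i. F (\<sigma> i) (map v (blocks (\<sigma> i)))) [0..<n]"
    proof (rule nth_equalityI)
      fix i assume "i < length (map (mor_app k F (restr (U \<sigma>) v)) bs)"
      hence i: "i < n" by (simp add: n_def)
      have "\<sigma> i \<subseteq> U \<sigma>" using i unfolding U_def by auto
      thus "map (mor_app k F (restr (U \<sigma>) v)) bs ! i = map (\<lambda>i. F (\<sigma> i) (map v (blocks (\<sigma> i)))) [0..<n] ! i"
        using mor_restr[OF F cE v bsPk[OF i] dU sP[OF s i]] i by (simp add: n_def)
    qed (simp add: n_def)
    thus ?thesis unfolding T_def T'_def by simp
  qed
  have T0: "T \<mu> = 0" if m: "\<mu> \<in> Part I" "\<mu> \<notin> U ` P" for \<mu>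
  proof -
    have "\<exists>i<n. \<not> (\<exists>\<pi>\<in>Part (bs ! i). \<pi> \<subseteq> \<mu>)"
    proof (rule ccontr)
      assume "\<not> ?thesis"
      hence ex: "\<forall>i<n. \<exists>\<pi>\<in>Part (bs ! i). \<pi> \<subseteq> \<mu>" by blast
      define \<sigma> where "\<sigma> = restrict (\<lambda>i. SOME \<pi>. \<pi> \<in> Part (bs ! i) \<and> \<pi> \<subseteq> \<mu>) {..<n}"
      have si: "\<sigma> i \<in> Part (bs ! i) \<and> \<sigma> i \<subseteq> \<mu>" if "i < n" for i
        using someI_ex[of "\<lambda>\<pi>. \<pi> \<in> Part (bs ! i) \<and> \<pi> \<subseteq> \<mu>"] ex that unfolding \<sigma>_def by auto
      have sP': "\<sigma> \<in> P" unfolding P_def \<sigma>_def using si by (auto simp: \<sigma>_def)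
      have "U \<sigma> \<subseteq> \<mu>" unfolding U_def using si by auto
      hence "U \<sigma> = \<mu>" using part_sub_eq[OF UP[OF sP'] m(1) part_props(4)[OF m(1) fI]] by blast
      thus False using m(2) sP' by blast
    qed
    then obtain i where i: "i < n" "\<not> (\<exists>\<pi>\<in>Part (bs ! i). \<pi> \<subseteq> \<mu>)" by blast
    have z: "mor_app k F (restr \<mu> v) (bs ! i) = 0" using mor_restr0[OF F cE v bsPk[OF i(1)] i(2)] .
    have val: "\<forall>B\<in>\<nu>. mor_app k F (restr \<mu> v) B \<in> E' B"
      using total_in[OF mor_app_total[OF F cE' total_restr[OF cE v]]] Part_Pk[OF I nu] by blast
    show ?thesis unfolding T_def bs_def using term_zero[OF G I nu val bsnu[OF i(1)]] z by (simp add: bs_def)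
  qed
  have injU: "inj_on U P"
  proof (rule inj_onI)
    fix \<sigma> \<sigma>' assume h: "\<sigma> \<in> P" "\<sigma>' \<in> P" "U \<sigma> = U \<sigma>'"
    show "\<sigma> = \<sigma>'"
    proof (rule PiE_ext)
      show "\<sigma> \<in> PiE {..<n} (\<lambda>i. Part (bs ! i))" "\<sigma>' \<in> PiE {..<n} (\<lambda>i. Part (bs ! i))" using h P_def by auto
      fix i assume "i \<in> {..<n}"
      thus "\<sigma> i = \<sigma>' i" using Usel[OF h(1), of i] Usel[OF h(2), of i] h(3) by auto
    qed
  qed
  have finP: "finite P" unfolding P_def using finite_Part Pk_fin bsPk by (intro finite_PiE) auto
  have "(\<Sum>\<mu>\<in>Part I. of_int (psign \<mu>) *\<^sub>R T \<mu>) = (\<Sum>\<mu>\<in>U ` P. of_int (psign \<mu>) *\<^sub>R T \<mu>)"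
    by (rule sum.mono_neutral_right) (use finite_Part fI UP T0 in auto)
  also have "\<dots> = (\<Sum>\<sigma>\<in>P. of_int (psign (U \<sigma>)) *\<^sub>R T (U \<sigma>))"
    by (rule sum.reindex[OF injU, unfolded comp_def])
  also have "\<dots> = (\<Sum>\<sigma>\<in>P. (of_int (psign \<nu>) * (\<Prod>i<n. of_int (psign (\<sigma> i)))) *\<^sub>R T' \<sigma>)"
  proof (rule sum.cong)
    fix \<sigma> assume s: "\<sigma> \<in> P"
    show "of_int (psign (U \<sigma>)) *\<^sub>R T (U \<sigma>) = (of_int (psign \<nu>) * (\<Prod>i<n. of_int (psign (\<sigma> i)))) *\<^sub>R T' \<sigma>"
    proof (cases "\<forall>B\<in>U \<sigma>. even (card B)")
      case True
      have "psign (U \<sigma>) = psign \<nu> * (\<Prod>i<n. psign (\<sigma> i))"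
        using psign_refine[OF nu fI refl s[unfolded P_def n_def bs_def]] True unfolding U_def n_def bs_def by blast
      thus ?thesis using TU[OF s] by simp
    next
      case False
      then obtain B where B: "B \<in> U \<sigma>" "odd (card B)" by blast
      then obtain i where i: "i < n" "B \<in> \<sigma> i" unfolding U_def by auto
      have BPk: "B \<in> Pk k" using Part_Pk[OF bsPk[OF i(1)] sP[OF s i(1)] i(2)] .
      have "v B = 0" using pe BPk B(2) total_in[OF v BPk] unfolding purely_even_def by auto
      hence "F (\<sigma> i) (map v (blocks (\<sigma> i))) = 0"
        using term_zero[OF F bsPk[OF i(1)] sP[OF s i(1)] vE[OF bsPk[OF i(1)] sP[OF s i(1)]] i(2)] by simp
      moreover have "mor_app k F (restr (U \<sigma>) v) (bs ! i) = F (\<sigma> i) (map v (blocks (\<sigma> i)))"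
        using mor_restr[OF F cE v bsPk[OF i(1)] part_props(4)[OF UP[OF s] fI] sP[OF s i(1)]] i
        unfolding U_def by auto
      moreover have val: "\<forall>B\<in>\<nu>. mor_app k F (restr (U \<sigma>) v) B \<in> E' B"
        using total_in[OF mor_app_total[OF F cE' total_restr[OF cE v]]] Part_Pk[OF I nu] by blast
      ultimately have "T (U \<sigma>) = 0"
        unfolding T_def bs_def using term_zero[OF G I nu val bsnu[OF i(1)]] by (simp add: bs_def)
      thus ?thesis using TU[OF s] by simp
    qed
  qed simp
  finally show ?thesis using R unfolding T_def bs_def by simp
qed



lemma part_comp:
  assumes pe: "purely_even k E" and cE': "cube k E'" and cE'': "cube k E''"
    and F: "mor k E E' F" and G: "mor k E' E'' G" and H: "mor k E E'' H"
    and hyp: "\<forall>v\<in>total k E. mor_app k H v = mor_app k G (mor_app k F v)"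
    and v: "v \<in> total k E"
  shows "mor_app k (msign H) v = mor_app k (msign G) (mor_app k (msign F) v)"
proof
  fix I
  show "mor_app k (msign H) v I = mor_app k (msign G) (mor_app k (msign F) v) I"
  proof (cases "I \<in> Pk k")
    case False thus ?thesis by (simp add: mor_app_def)
  next
    case I: True
    have cE: "cube k E" using pe pe_cube by blast
    have "mor_app k (msign H) v I = (\<Sum>\<mu>\<in>Part I. of_int (psign \<mu>) *\<^sub>R mor_app k H (restr \<mu> v) I)"
      using msign_expand[OF H cE v I] .
    also have "\<dots> = (\<Sum>\<mu>\<in>Part I. of_int (psign \<mu>) *\<^sub>R mor_app k G (mor_app k F (restr \<mu> v)) I)"
      using hyp total_restr[OF cE v] by simp
    also have "\<dots> = (\<Sum>\<mu>\<in>Part I. \<Sum>\<nu>\<in>Part I. of_int (psign \<mu>) *\<^sub>R G \<nu> (map (mor_app k F (restr \<mu> v)) (blocks \<nu>)))"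
      using I by (simp add: mor_app_def scaleR_sum_right)
    also have "\<dots> = (\<Sum>\<nu>\<in>Part I. \<Sum>\<mu>\<in>Part I. of_int (psign \<mu>) *\<^sub>R G \<nu> (map (mor_app k F (restr \<mu> v)) (blocks \<nu>)))"
      by (rule sum.swap)
    also have "\<dots> = (\<Sum>\<nu>\<in>Part I. of_int (psign \<nu>) *\<^sub>R G \<nu> (map (mor_app k (msign F) v) (blocks \<nu>)))"
      by (rule sum.cong[OF refl], rule part_comp_nu[OF pe cE' cE'' F G v I])
    also have "\<dots> = mor_app k (msign G) (mor_app k (msign F) v) I"
      using I by (simp add: mor_app_def msign_def)
    finally show ?thesis .
  qed
qed

theorem mainTheorem19:
  fixes k :: nat
    and E :: "nat set \<Rightarrow> 'a::real_vector set"
    and E' :: "nat set \<Rightarrow> 'b::real_vector set"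
    and E'' :: "nat set \<Rightarrow> 'c::real_vector set"
  assumes "purely_even k E" and "purely_even k E'" and "purely_even k E''"
  shows
    \<comment> \<open>(id_E)^- = id_E\<close>
    "(\<forall>Id. mor k E E Id \<longrightarrow> (\<forall>v\<in>total k E. mor_app k Id v = v) \<longrightarrow>
        (\<forall>v\<in>total k E. mor_app k (msign Id) v = v))
   \<comment> \<open>(g \<circ> f)^- = g^- \<circ> f^-\<close>
   \<and> (\<forall>F G H. mor k E E' F \<longrightarrow> mor k E' E'' G \<longrightarrow> mor k E E'' H \<longrightarrow>
        (\<forall>v\<in>total k E. mor_app k H v = mor_app k G (mor_app k F v)) \<longrightarrow>
        (\<forall>v\<in>total k E. mor_app k (msign H) v = mor_app k (msign G) (mor_app k (msign F) v)))
   \<comment> \<open>f^- is a morphism and (f^-)^- = f\<close>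
   \<and> (\<forall>F. mor k E E' F \<longrightarrow> mor k E E' (msign F) \<and>
        (\<forall>v\<in>total k E. mor_app k (msign (msign F)) v = mor_app k F v))
   \<comment> \<open>respects products: projections and pairings are preserved\<close>
   \<and> (\<forall>P. mor k (prod_cube E E') E P \<longrightarrow>
        (\<forall>v\<in>total k (prod_cube E E'). mor_app k P v = (\<lambda>I. fst (v I))) \<longrightarrow>
        (\<forall>v\<in>total k (prod_cube E E'). mor_app k (msign P) v = (\<lambda>I. fst (v I))))
   \<and> (\<forall>P. mor k (prod_cube E E') E' P \<longrightarrow>
        (\<forall>v\<in>total k (prod_cube E E'). mor_app k P v = (\<lambda>I. snd (v I))) \<longrightarrow>
        (\<forall>v\<in>total k (prod_cube E E'). mor_app k (msign P) v = (\<lambda>I. snd (v I))))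
   \<and> (\<forall>F G H. mor k E E' F \<longrightarrow> mor k E E'' G \<longrightarrow> mor k E (prod_cube E' E'') H \<longrightarrow>
        (\<forall>v\<in>total k E. mor_app k H v = (\<lambda>I. (mor_app k F v I, mor_app k G v I))) \<longrightarrow>
        (\<forall>v\<in>total k E. mor_app k (msign H) v =
            (\<lambda>I. (mor_app k (msign F) v I, mor_app k (msign G) v I))))"
proof -
  have cE: "cube k E" and cE': "cube k E'" and cE'': "cube k E''" using assms pe_cube by blast+
  have cP: "cube k (prod_cube E E')" using cube_prod[OF cE cE'] .
  show ?thesis
  proof (intro conjI allI impI ballI)
    fix Idf v assume "mor k E E Idf" "\<forall>v\<in>total k E. mor_app k Idf v = v" "v \<in> total k E"
    thus "mor_app k (msign Idf) v = v" using part_id[OF cE] by blast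
  next
    fix F G H v assume "mor k E E' F" "mor k E' E'' G" "mor k E E'' H"
      "\<forall>v\<in>total k E. mor_app k H v = mor_app k G (mor_app k F v)" "v \<in> total k E"
    thus "mor_app k (msign H) v = mor_app k (msign G) (mor_app k (msign F) v)"
      using part_comp[OF assms(1) cE' cE''] by blast
  next
    fix F assume "mor k E E' F" thus "mor k E E' (msign F)" using mor_msign[OF cE'] by blast
  next
    fix F v show "mor_app k (msign (msign F)) v = mor_app k F v" by (simp add: msign_msign)
  next
    fix P v assume "mor k (prod_cube E E') E P"
      "\<forall>v\<in>total k (prod_cube E E'). mor_app k P v = (\<lambda>I. fst (v I))" "v \<in> total k (prod_cube E E')"
    thus "mor_app k (msign P) v = (\<lambda>I. fst (v I))" using part_proj[OF cP, of E P fst v] by simp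
  next
    fix P v assume "mor k (prod_cube E E') E' P"
      "\<forall>v\<in>total k (prod_cube E E'). mor_app k P v = (\<lambda>I. snd (v I))" "v \<in> total k (prod_cube E E')"
    thus "mor_app k (msign P) v = (\<lambda>I. snd (v I))" using part_proj[OF cP, of E' P snd v] by simp
  next
    fix F G H v assume "mor k E E' F" "mor k E E'' G" "mor k E (prod_cube E' E'') H"
      "\<forall>v\<in>total k E. mor_app k H v = (\<lambda>I. (mor_app k F v I, mor_app k G v I))" "v \<in> total k E"
    thus "mor_app k (msign H) v = (\<lambda>I. (mor_app k (msign F) v I, mor_app k (msign G) v I))"
      using part_pair[OF cE] by blast
  qed
qed

end
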